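(* Let $s_1,\dots,s_n>0$, $S=\sum_{j=1}^n s_j$, $s_0>0$, and $I_1=\{j\in[n]: s_j>s_0\}$. Let $k\ge1$ and draw indices $\pi(1),\dots,\pi(k)\in[n]$ i.i.d., each equal to $j$ with probability $p_j=s_j/S$; assign to the $i$-th draw the weight $w_i=\frac{1}{k\,p_{\pi(i)}}$. Then with probability at least $1-\frac1k$, $$\sum_{i\in[k]:\,\pi(i)\in I_1}w_i\le\frac{2S}{s_0}.$$ *)

theory Defs
  imports "HOL-Probability.Probability"
begin

definition sample_pmf :: "(nat \<Rightarrow> real) \<Rightarrow> nat \<Rightarrow> nat pmf" where
  "sample_pmf s n = embed_pmf (\<lambda>j. if j \<in> {1..n} then s j / (\<Sum>i=1..n. s i) else 0)"

definition draws_pmf :: "(nat \<Rightarrow> real) \<Rightarrow> nat \<Rightarrow> nat \<Rightarrow> (nat \<Rightarrow> nat) pmf" where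
  "draws_pmf s n k = Pi_pmf {1..k} 0 (\<lambda>_. sample_pmf s n)"

end

theory Submission
  imports Defs
begin

theorem lemma14:
  fixes s :: "nat \<Rightarrow> real" and n k :: nat and s0 :: real
  assumes "\<And>j. j \<in> {1..n} \<Longrightarrow> s j > 0"
    and "s0 > 0"
    and "n \<ge> 1" and "k \<ge> 1"
  defines "S \<equiv> (\<Sum>j=1..n. s j)"
    and "I1 \<equiv> {j \<in> {1..n}. s j > s0}"
  shows "measure_pmf.prob (draws_pmf s n k)
           {\<pi>. (\<Sum>i\<in>{i \<in> {1..k}. \<pi> i \<in> I1}. 1 / (real k * (s (\<pi> i) / S))) \<le> 2 * S / s0}
         \<ge> 1 - 1 / real k"
proof -
  have Spos: "S > 0" unfolding S_def
    using assms(1,3) by (intro sum_pos) auto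
  have kpos: "real k > 0" using assms(4) by simp
  have all: "(\<Sum>i\<in>{i \<in> {1..k}. \<pi> i \<in> I1}. 1 / (real k * (s (\<pi> i) / S))) \<le> 2 * S / s0" for \<pi>
  proof -
    let ?A = "{i \<in> {1..k}. \<pi> i \<in> I1}"
    have "(\<Sum>i\<in>?A. 1 / (real k * (s (\<pi> i) / S))) \<le> (\<Sum>i\<in>?A. S / (real k * s0))"
    proof (rule sum_mono)
      fix i assume "i \<in> ?A"
      then have h: "s (\<pi> i) > s0" unfolding I1_def by auto
      have "1 / (real k * (s (\<pi> i) / S)) = S / (real k * s (\<pi> i))"
        using Spos by (simp add: field_simps)
      also have "\<dots> \<le> S / (real k * s0)"
        using h kpos Spos assms(2)
        by (intro divide_left_mono mult_left_mono mult_pos_pos) auto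
      finally show "1 / (real k * (s (\<pi> i) / S)) \<le> S / (real k * s0)" .
    qed
    also have "\<dots> = card ?A * (S / (real k * s0))" by simp
    also have "\<dots> \<le> real k * (S / (real k * s0))"
    proof (rule mult_right_mono)
      have "card ?A \<le> card {1..k}" by (rule card_mono) auto
      then show "real (card ?A) \<le> real k" by simp
      show "0 \<le> S / (real k * s0)" using Spos kpos assms(2) by simp
    qed
    also have "\<dots> = S / s0" using kpos by simp
    also have "\<dots> \<le> 2 * S / s0" using Spos assms(2) by (simp add: divide_right_mono)
    finally show ?thesis .
  qed
  have "measure_pmf.prob (draws_pmf s n k)
           {\<pi>. (\<Sum>i\<in>{i \<in> {1..k}. \<pi> i \<in> I1}. 1 / (real k * (s (\<pi> i) / S))) \<le> 2 * S / s0} = 1"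
    using all by simp
  moreover have "1 - 1 / real k \<le> 1" using kpos by simp
  ultimately show ?thesis by simp
qed

end
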